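(* Let $F$ be a vector lattice endowed with a locally solid additive convergence $\eta$, let $A\subset F$, and let $E,H$ be ideals of $F$. Then: (i) $u_{A}\eta=u_{I(A)}\eta$, and this is the weakest locally solid additive convergence on $F$ which is stronger than $\eta$ on $[0_{F},|a|]$ for every $a\in A$; moreover $u_A\eta$ coincides with $\eta$ on $[0_F,|a|]$ for every $a\in A$. (ii) For a net $(f_\alpha)_{\alpha}\subset F_+$: $f_{\alpha}\xrightarrow{u_{A}\eta} 0_{F}$ iff $g_{\alpha}\xrightarrow{\eta} 0_{F}$ for every $a\in A$ and every net $(g_{\alpha})\subset[0_{F},|a|]$ (indexed by the same set) with $0_{F}\le g_{\alpha}\le f_{\alpha}$ for every $\alpha$. (iii) $u_{H}u_{E}\eta=u_{E\cap H}\eta$. In particular, $u_{E}u\eta=uu_{E}\eta=u_{E}u_{E}\eta=u_{E}\eta$. (iv) If $\eta$ is idempotent, then $u_{A}\eta=u_{\overline{I(A)}}\eta$. (v) If $\eta$ is idempotent and $h\in F_{+}$ is a topological unit, then for a net $(f_{\alpha})\subset F_{+}$ we have $f_{\alpha}\xrightarrow{u\eta} 0_{F}$ iff $h\wedge f_{\alpha}\xrightarrow{\eta} 0_{F}$.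
   Context: A convergence on a vector lattice $F$ is locally solid additive if addition and $f\mapsto -f$ are continuous and $|e_\alpha|\le|f_\alpha|$, $f_\alpha\to0_F$ imply $e_\alpha\to 0_F$. For $A\subset F$, $u_A\eta$ is the locally solid additive convergence on $F$ given by: $f_\alpha\xrightarrow{u_A\eta}f$ iff $|a|\wedge|f_\alpha-f|\xrightarrow{\eta}0_F$ for every $a\in A$; $u\eta:=u_F\eta$. $I(A)$ denotes the ideal generated by $A$. A convergence $\theta$ is stronger than $\eta$ on a set $S$ if whenever a net in $S$ $\theta$-converges to a point of $S$, it $\eta$-converges to that point; "coincides on $S$" means both directions. A set is closed if it contains the limits of all convergent nets in it; $\overline{G}$ (closure w.r.t. $\eta$) is the intersection of all closed sets containing $G$. $\eta$ is idempotent if for any nets $(f_{\alpha})_{\alpha\in A},(g_{\beta})_{\beta\in B}\subset F_{+}$ with $g_{\beta}\xrightarrow{\eta}0_{F}$ and $(f_{\alpha}-g_{\beta})^{+}\xrightarrow[\alpha]{\eta}0_{F}$ for every $\beta$, one has $f_{\alpha}\xrightarrow{\eta}0_{F}$. An element $h\in F_+$ is a topological unit if the principal ideal $F_h=\bigcup_{\lambda\ge0}\lambda[-h,h]$ satisfies $\overline{F_h}=F$. *)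

theory Defs
  imports Complex_Main
begin

text \<open>Nets are represented, as usual in Isabelle, by their tail filters:
a net (f_i) over an index filter D corresponds to the filter  filtermap f D.\<close>

type_synonym 'a convergence = "'a filter \<Rightarrow> 'a \<Rightarrow> bool"

definition vabs :: "'a::{ordered_real_vector,lattice} \<Rightarrow> 'a" where
  "vabs x = sup x (- x)"

definition pospart :: "'a::{ordered_real_vector,lattice} \<Rightarrow> 'a" where
  "pospart x = sup x 0"

text \<open>Axioms of a convergence: constant nets converge to their value, and
quasi-subnets (finer filters) of convergent nets converge to the same limit.\<close>
definition is_convergence :: "'a convergence \<Rightarrow> bool" where
  "is_convergence \<eta> \<longleftrightarrow>
     (\<forall>x. \<eta> (principal {x}) x) \<and> (\<forall>F G x. F \<le> G \<and> \<eta> G x \<longrightarrow> \<eta> F x)"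

definition locally_solid_additive :: "'a::{ordered_real_vector,lattice} convergence \<Rightarrow> bool" where
  "locally_solid_additive \<eta> \<longleftrightarrow> is_convergence \<eta> \<and>
     (\<forall>F G x y. \<eta> F x \<and> \<eta> G y \<longrightarrow> \<eta> (filtermap (\<lambda>(u, v). u + v) (F \<times>\<^sub>F G)) (x + y)) \<and>
     (\<forall>F x. \<eta> F x \<longrightarrow> \<eta> (filtermap uminus F) (- x)) \<and>
     (\<forall>D :: ('a \<times> 'a) filter.
        (\<forall>\<^sub>F p in D. vabs (fst p) \<le> vabs (snd p)) \<and> \<eta> (filtermap snd D) 0
          \<longrightarrow> \<eta> (filtermap fst D) 0)"

definition uconv :: "'a::{ordered_real_vector,lattice} set \<Rightarrow> 'a convergence \<Rightarrow> 'a convergence" where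
  "uconv A \<eta> F x \<longleftrightarrow> (\<forall>a\<in>A. \<eta> (filtermap (\<lambda>y. inf (vabs a) (vabs (y - x))) F) 0)"

definition is_ideal :: "'a::{ordered_real_vector,lattice} set \<Rightarrow> bool" where
  "is_ideal E \<longleftrightarrow> 0 \<in> E \<and> (\<forall>x\<in>E. \<forall>y\<in>E. x + y \<in> E) \<and> (\<forall>c. \<forall>x\<in>E. c *\<^sub>R x \<in> E) \<and>
     (\<forall>x\<in>E. \<forall>y. vabs y \<le> vabs x \<longrightarrow> y \<in> E)"

definition ideal_of :: "'a::{ordered_real_vector,lattice} set \<Rightarrow> 'a set" where
  "ideal_of A = \<Inter>{E. is_ideal E \<and> A \<subseteq> E}"

definition principal_ideal :: "'a::{ordered_real_vector,lattice} \<Rightarrow> 'a set" where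
  "principal_ideal h = {x. \<exists>c\<ge>0. \<exists>y. - h \<le> y \<and> y \<le> h \<and> x = c *\<^sub>R y}"

text \<open>theta is stronger than eta on S: every net in S that theta-converges to a
point of S eta-converges to it. (A net in S = a proper filter containing S.)\<close>
definition stronger_on :: "'a set \<Rightarrow> 'a convergence \<Rightarrow> 'a convergence \<Rightarrow> bool" where
  "stronger_on S \<theta> \<eta> \<longleftrightarrow>
     (\<forall>F x. F \<noteq> bot \<and> (\<forall>\<^sub>F y in F. y \<in> S) \<and> x \<in> S \<and> \<theta> F x \<longrightarrow> \<eta> F x)"

definition coincide_on :: "'a set \<Rightarrow> 'a convergence \<Rightarrow> 'a convergence \<Rightarrow> bool" where
  "coincide_on S \<theta> \<eta> \<longleftrightarrow> stronger_on S \<theta> \<eta> \<and> stronger_on S \<eta> \<theta>"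

definition conv_closed :: "'a convergence \<Rightarrow> 'a set \<Rightarrow> bool" where
  "conv_closed \<eta> C \<longleftrightarrow> (\<forall>F x. F \<noteq> bot \<and> (\<forall>\<^sub>F y in F. y \<in> C) \<and> \<eta> F x \<longrightarrow> x \<in> C)"

definition conv_closure :: "'a convergence \<Rightarrow> 'a set \<Rightarrow> 'a set" where
  "conv_closure \<eta> G = \<Inter>{C. conv_closed \<eta> C \<and> G \<subseteq> C}"

text \<open>Idempotency: nets (f_alpha), (g_beta) in F_+ (filters F, G, the latter
represented by its (nonempty-indexed) range S).\<close>
definition idempotent :: "'a::{ordered_real_vector,lattice} convergence \<Rightarrow> bool" where
  "idempotent \<eta> \<longleftrightarrow>
     (\<forall>F G S. (\<forall>\<^sub>F y in F. 0 \<le> y) \<and> G \<noteq> bot \<and> (\<forall>\<^sub>F z in G. z \<in> S) \<and> (\<forall>z\<in>S. 0 \<le> z) \<and>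
        \<eta> G 0 \<and> (\<forall>z\<in>S. \<eta> (filtermap (\<lambda>y. pospart (y - z)) F) 0) \<longrightarrow> \<eta> F 0)"

definition topological_unit :: "'a::{ordered_real_vector,lattice} convergence \<Rightarrow> 'a \<Rightarrow> bool" where
  "topological_unit \<eta> h \<longleftrightarrow> 0 \<le> h \<and> conv_closure \<eta> (principal_ideal h) = UNIV"

definition directed :: "('i \<Rightarrow> 'i \<Rightarrow> bool) \<Rightarrow> bool" where
  "directed le \<longleftrightarrow> reflp le \<and> transp le \<and> (\<forall>a b. \<exists>c. le a c \<and> le b c)"

definition tails :: "('i \<Rightarrow> 'i \<Rightarrow> bool) \<Rightarrow> 'i filter" where
  "tails le = (INF a. principal {b. le a b})"

end

theory Submission
  imports Defs "HOL-Library.Lattice_Algebras"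
begin


interpretation V: lattice_ab_group_add_abs vabs "(+)" "0::'a::{ordered_real_vector,lattice}" "(-)" uminus "(\<le>)" "(<)" inf sup
  by unfold_locales (simp add: vabs_def)

lemma inf_add_le:
  fixes u v w :: "'a::{ordered_real_vector,lattice}"
  assumes "0 \<le> u" "0 \<le> v" "0 \<le> w"
  shows "inf (u + v) w \<le> inf u w + inf v w"
proof -
  have e: "inf u w + inf v w = inf (inf (u + v) (u + w)) (inf (w + v) (w + w))"
    by (simp add: V.add_inf_distrib_left V.add_inf_distrib_right inf_aci)
  have "inf (u + v) w \<le> u + w" using assms by (meson add_increasing inf.coboundedI2 order_refl)
  moreover have "inf (u + v) w \<le> w + v" using assms by (meson add_increasing2 inf.coboundedI2 order_refl)
  moreover have "inf (u + v) w \<le> w + w" using assms by (meson add_increasing2 inf.coboundedI2 order_refl)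
  ultimately show ?thesis unfolding e by (simp add: le_infI le_infI1)
qed

lemma vabs_inf_nonneg: "vabs (inf (vabs a) (vabs b)) = inf (vabs a) (vabs (b::'a::{ordered_real_vector,lattice}))"
  by (simp add: V.abs_of_nonneg)

lemma vabs_scale_le:
  fixes x :: "'a::{ordered_real_vector,lattice}"
  shows "vabs (c *\<^sub>R x) \<le> \<bar>c\<bar> *\<^sub>R vabs x"
proof (cases "c \<ge> 0")
  case True
  have "c *\<^sub>R x \<le> c *\<^sub>R vabs x" using scaleR_left_mono[OF V.abs_ge_self[of x] True] .
  moreover have "- (c *\<^sub>R x) \<le> c *\<^sub>R vabs x"
    using scaleR_left_mono[OF V.abs_ge_minus_self[of x] True] by simp
  ultimately show ?thesis using True by (simp add: V.abs_leI)
next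
  case False
  hence c: "0 \<le> - c" by simp
  have "c *\<^sub>R x \<le> (- c) *\<^sub>R vabs x"
    using scaleR_left_mono[OF V.abs_ge_minus_self[of x] c] by simp
  moreover have "- (c *\<^sub>R x) \<le> (-c) *\<^sub>R vabs x"
    using scaleR_left_mono[OF V.abs_ge_self[of x] c] by simp
  ultimately show ?thesis using False by (simp add: V.abs_leI)
qed

lemma key_ineq:
  fixes b b' w :: "'a::{ordered_real_vector,lattice}"
  assumes "0 \<le> w"
  shows "inf (vabs b) w \<le> vabs (b' - b) + inf (vabs b') w"
proof -
  have "vabs b \<le> vabs (b' - b) + vabs b'"
    using V.abs_triangle_ineq[of "b - b'" b'] V.abs_minus_commute[of b b'] by simp
  hence "inf (vabs b) w \<le> inf (vabs (b' - b) + vabs b') w" by (simp add: inf.coboundedI1)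
  also have "\<dots> \<le> inf (vabs (b' - b)) w + inf (vabs b') w"
    by (rule inf_add_le) (simp_all add: assms)
  also have "\<dots> \<le> vabs (b' - b) + inf (vabs b') w" by (simp add: add_right_mono)
  finally show ?thesis .
qed


lemma lsa_conv: "locally_solid_additive \<eta> \<Longrightarrow> is_convergence \<eta>"
  by (simp add: locally_solid_additive_def)

lemma conv_le: "is_convergence \<eta> \<Longrightarrow> F \<le> G \<Longrightarrow> \<eta> G x \<Longrightarrow> \<eta> F x"
  unfolding is_convergence_def by blast

lemma conv_const: "is_convergence \<eta> \<Longrightarrow> \<eta> (filtermap (\<lambda>_. c) F) c"
proof -
  assume c: "is_convergence \<eta>"
  have "filtermap (\<lambda>_. c) F \<le> principal {c}"
    by (auto simp: le_filter_def eventually_filtermap eventually_principal)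
  thus ?thesis using c unfolding is_convergence_def by blast
qed

lemma conv_bot: "is_convergence \<eta> \<Longrightarrow> \<eta> bot x"
  unfolding is_convergence_def by (meson bot.extremum)

lemma net_add:
  fixes \<eta> :: "'a::{ordered_real_vector,lattice} convergence"
  assumes lsa: "locally_solid_additive \<eta>" and "\<eta> (filtermap f F) x" "\<eta> (filtermap g F) y"
  shows "\<eta> (filtermap (\<lambda>z. f z + g z) F) (x + y)"
proof -
  have 1: "\<eta> (filtermap (\<lambda>(u, v). u + v) (filtermap f F \<times>\<^sub>F filtermap g F)) (x + y)"
    using assms unfolding locally_solid_additive_def by blast
  have "filtermap (\<lambda>z. f z + g z) F = filtermap (\<lambda>(u, v). u + v) (filtermap (\<lambda>z. (f z, g z)) F)"
    by (simp add: filtermap_filtermap)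
  also have "\<dots> \<le> filtermap (\<lambda>(u, v). u + v) (filtermap f F \<times>\<^sub>F filtermap g F)"
    by (intro filtermap_mono filtermap_Pair)
  finally show ?thesis using 1 conv_le[OF lsa_conv[OF lsa]] by blast
qed

lemma net_solid:
  fixes \<eta> :: "'a::{ordered_real_vector,lattice} convergence"
  assumes lsa: "locally_solid_additive \<eta>"
    and ev: "eventually (\<lambda>z. vabs (f z) \<le> vabs (g z)) F" and c: "\<eta> (filtermap g F) 0"
  shows "\<eta> (filtermap f F) 0"
proof -
  define D where "D = filtermap (\<lambda>z. (f z, g z)) F"
  have all: "\<forall>D :: ('a \<times> 'a) filter.
        (\<forall>\<^sub>F p in D. vabs (fst p) \<le> vabs (snd p)) \<and> \<eta> (filtermap snd D) 0
          \<longrightarrow> \<eta> (filtermap fst D) 0" using lsa unfolding locally_solid_additive_def by blast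
  have "eventually (\<lambda>p. vabs (fst p) \<le> vabs (snd p)) D" using ev by (simp add: D_def eventually_filtermap)
  moreover have "filtermap snd D = filtermap g F" "filtermap fst D = filtermap f F"
    by (simp_all add: D_def filtermap_filtermap)
  ultimately show ?thesis using all[rule_format, of D] c by simp
qed

lemma net_shift:
  fixes \<eta> :: "'a::{ordered_real_vector,lattice} convergence"
  assumes lsa: "locally_solid_additive \<eta>" and c: "\<eta> (filtermap f F) x"
  shows "\<eta> (filtermap (\<lambda>z. f z - a) F) (x - a)"
  using net_add[OF lsa c conv_const[OF lsa_conv[OF lsa], of "- a" F]] by simp

lemma net_shift0:
  fixes \<eta> :: "'a::{ordered_real_vector,lattice} convergence"
  assumes lsa: "locally_solid_additive \<eta>" and c: "\<eta> F x"
  shows "\<eta> (filtermap (\<lambda>z. z - a) F) (x - a)"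
  using net_shift[OF lsa, of "\<lambda>z. z" F x a] c by (simp add: filtermap_ident)

lemma net_unshift0:
  fixes \<eta> :: "'a::{ordered_real_vector,lattice} convergence"
  assumes lsa: "locally_solid_additive \<eta>" and c: "\<eta> (filtermap (\<lambda>z. z - x) F) 0"
  shows "\<eta> F x"
  using net_shift[OF lsa c, of "- x"] by (simp add: filtermap_ident)

lemma eta_imp_uconv:
  fixes \<eta> :: "'a::{ordered_real_vector,lattice} convergence"
  assumes lsa: "locally_solid_additive \<eta>" and c: "\<eta> F x"
  shows "uconv A \<eta> F x"
  unfolding uconv_def
proof
  fix a assume "a \<in> A"
  have "\<eta> (filtermap (\<lambda>z. z - x) F) 0" using net_shift0[OF lsa c, of x] by simp
  then show "\<eta> (filtermap (\<lambda>y. inf (vabs a) (vabs (y - x))) F) 0"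
    by (rule net_solid[OF lsa, rotated]) (simp add: V.abs_of_nonneg)
qed

lemma uconv_mono_set: "A \<subseteq> B \<Longrightarrow> uconv B \<eta> F x \<Longrightarrow> uconv A \<eta> F x"
  unfolding uconv_def by blast


lemma uconv_lsa:
  fixes \<eta> :: "'a::{ordered_real_vector,lattice} convergence"
  assumes lsa: "locally_solid_additive \<eta>"
  shows "locally_solid_additive (uconv A \<eta>)"
proof -
  have conv: "is_convergence \<eta>" using lsa by (rule lsa_conv)
  have c1: "is_convergence (uconv A \<eta>)"
    unfolding is_convergence_def
  proof (intro conjI allI impI)
    fix x
    show "uconv A \<eta> (principal {x}) x"
      unfolding uconv_def using conv unfolding is_convergence_def
      by (simp add: filtermap_principal inf_absorb2)
  next
    fix F G x assume "F \<le> G \<and> uconv A \<eta> G x"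
    thus "uconv A \<eta> F x" unfolding uconv_def
      using conv_le[OF conv] filtermap_mono by blast
  qed
  have c2: "uconv A \<eta> (filtermap (\<lambda>(u, v). u + v) (F \<times>\<^sub>F G)) (x + y)"
    if F: "uconv A \<eta> F x" and G: "uconv A \<eta> G y" for F G x y
    unfolding uconv_def
  proof
    fix a assume a: "a \<in> A"
    define p where "p = (\<lambda>u. inf (vabs a) (vabs (u - x)))"
    define q where "q = (\<lambda>v. inf (vabs a) (vabs (v - y)))"
    have "\<eta> (filtermap p F) 0" "\<eta> (filtermap q G) 0" using F G a by (auto simp: uconv_def p_def q_def)
    hence "\<eta> (filtermap (\<lambda>(u, v). u + v) (filtermap p F \<times>\<^sub>F filtermap q G)) (0 + 0)"
      using lsa unfolding locally_solid_additive_def by blast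
    also have "filtermap (\<lambda>(u, v). u + v) (filtermap p F \<times>\<^sub>F filtermap q G)
       = filtermap (\<lambda>(u, v). p u + q v) (F \<times>\<^sub>F G)"
      by (simp add: prod_filtermap1 prod_filtermap2 filtermap_filtermap split_def)
    finally have h: "\<eta> (filtermap (\<lambda>(u, v). p u + q v) (F \<times>\<^sub>F G)) 0" by simp
    have ineq: "inf (vabs a) (vabs (u + v - (x + y))) \<le> vabs (p u + q v)" for u v
    proof -
      have pq: "0 \<le> p u" "0 \<le> q v" by (simp_all add: p_def q_def)
      have "inf (vabs a) (vabs (u + v - (x + y))) \<le> inf (vabs a) (vabs (u - x) + vabs (v - y))"
        using V.abs_triangle_ineq[of "u - x" "v - y"] by (simp add: inf.coboundedI2 algebra_simps)
      also have "\<dots> \<le> p u + q v"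
        using inf_add_le[of "vabs (u - x)" "vabs (v - y)" "vabs a"] by (simp add: p_def q_def inf_commute)
      finally show ?thesis
        using pq by (simp add: V.abs_of_nonneg)
    qed
    have "\<eta> (filtermap (\<lambda>(u, v). inf (vabs a) (vabs (u + v - (x + y)))) (F \<times>\<^sub>F G)) 0"
      by (rule net_solid[OF lsa _ h]) (simp add: ineq split_def)
    thus "\<eta> (filtermap (\<lambda>ya. inf (vabs a) (vabs (ya - (x + y)))) (filtermap (\<lambda>(u, v). u + v) (F \<times>\<^sub>F G))) 0"
      by (simp add: filtermap_filtermap split_def)
  qed
  have c3: "uconv A \<eta> (filtermap uminus F) (- x)" if "uconv A \<eta> F x" for F x
    using that unfolding uconv_def
    by (simp add: filtermap_filtermap V.abs_minus_commute[of x] algebra_simps)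
  have c4: "uconv A \<eta> (filtermap fst D) 0"
    if ev: "\<forall>\<^sub>F p in D. vabs (fst p) \<le> vabs (snd p)" and c: "uconv A \<eta> (filtermap snd D) 0" for D
    unfolding uconv_def
  proof
    fix a assume a: "a \<in> A"
    have "\<eta> (filtermap (\<lambda>p. inf (vabs a) (vabs (snd p))) D) 0"
      using c a by (simp add: uconv_def filtermap_filtermap)
    hence "\<eta> (filtermap (\<lambda>p. inf (vabs a) (vabs (fst p))) D) 0"
      by (rule net_solid[OF lsa, rotated]) (use ev in \<open>auto elim!: eventually_mono simp: V.abs_of_nonneg inf.coboundedI2\<close>)
    thus "\<eta> (filtermap (\<lambda>y. inf (vabs a) (vabs (y - 0))) (filtermap fst D)) 0"
      by (simp add: filtermap_filtermap)
  qed
  show ?thesis unfolding locally_solid_additive_def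
    using c1 c2 c3 c4 by blast
qed

lemma uconv_stronger:
  fixes \<eta> :: "'a::{ordered_real_vector,lattice} convergence"
  assumes lsa: "locally_solid_additive \<eta>" and a: "a \<in> A"
  shows "stronger_on {0..vabs a} (uconv A \<eta>) \<eta>"
  unfolding stronger_on_def
proof (intro allI impI, elim conjE)
  fix F x
  assume ev: "\<forall>\<^sub>F y in F. y \<in> {0..vabs a}" and x: "x \<in> {0..vabs a}" and u: "uconv A \<eta> F x"
  have h: "\<eta> (filtermap (\<lambda>y. inf (vabs a) (vabs (y - x))) F) 0" using u a by (simp add: uconv_def)
  have "\<eta> (filtermap (\<lambda>y. y - x) F) 0"
  proof (rule net_solid[OF lsa _ h])
    show "\<forall>\<^sub>F y in F. vabs (y - x) \<le> vabs (inf (vabs a) (vabs (y - x)))"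
      using ev
    proof (rule eventually_mono)
      fix y assume y: "y \<in> {0..vabs a}"
      have "vabs (y - x) \<le> vabs a"
      proof (rule V.abs_leI)
        show "y - x \<le> vabs a" using x y by (auto intro: order_trans[of _ y] simp: diff_le_eq add_increasing2)
        show "- (y - x) \<le> vabs a" using x y by (auto intro: order_trans[of _ x] simp: diff_le_eq add_increasing2)
      qed
      thus "vabs (y - x) \<le> vabs (inf (vabs a) (vabs (y - x)))"
        by (simp add: V.abs_of_nonneg inf_absorb2)
    qed
  qed
  thus "\<eta> F x" by (rule net_unshift0[OF lsa])
qed

lemma uconv_weakest:
  fixes \<eta> \<theta> :: "'a::{ordered_real_vector,lattice} convergence"
  assumes lsa: "locally_solid_additive \<eta>" and lt: "locally_solid_additive \<theta>"
    and st: "\<forall>a\<in>A. stronger_on {0..vabs a} \<theta> \<eta>"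
  shows "stronger_on UNIV \<theta> (uconv A \<eta>)"
  unfolding stronger_on_def uconv_def
proof (intro allI impI ballI, elim conjE)
  fix F x a assume t: "\<theta> F x" and a: "a \<in> A"
  show "\<eta> (filtermap (\<lambda>y. inf (vabs a) (vabs (y - x))) F) 0"
  proof (cases "F = bot")
    case True thus ?thesis using conv_bot[OF lsa_conv[OF lsa]] by simp
  next
    case False
    have "\<theta> (filtermap (\<lambda>z. z - x) F) 0" using net_shift0[OF lt t, of x] by simp
    hence "\<theta> (filtermap (\<lambda>y. inf (vabs a) (vabs (y - x))) F) 0"
      by (rule net_solid[OF lt, rotated]) (simp add: V.abs_of_nonneg)
    moreover have "filtermap (\<lambda>y. inf (vabs a) (vabs (y - x))) F \<noteq> bot" using False by (simp add: filtermap_bot_iff)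
    moreover have "\<forall>\<^sub>F y in filtermap (\<lambda>y. inf (vabs a) (vabs (y - x))) F. y \<in> {0..vabs a}"
      by (simp add: eventually_filtermap)
    moreover have "(0::'a) \<in> {0..vabs a}" by simp
    ultimately show ?thesis using st a unfolding stronger_on_def by blast
  qed
qed


definition good :: "'a::{ordered_real_vector,lattice} set \<Rightarrow> 'a convergence \<Rightarrow> 'a \<Rightarrow> bool" where
  "good A \<eta> b \<longleftrightarrow> (\<forall>F x. uconv A \<eta> F x \<longrightarrow> \<eta> (filtermap (\<lambda>y. inf (vabs b) (vabs (y - x))) F) 0)"

lemma good_down:
  fixes \<eta> :: "'a::{ordered_real_vector,lattice} convergence"
  assumes lsa: "locally_solid_additive \<eta>" and g: "good A \<eta> b" and le: "vabs c \<le> vabs b"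
  shows "good A \<eta> c"
  unfolding good_def
proof (intro allI impI)
  fix F x assume "uconv A \<eta> F x"
  hence "\<eta> (filtermap (\<lambda>y. inf (vabs b) (vabs (y - x))) F) 0" using g by (simp add: good_def)
  thus "\<eta> (filtermap (\<lambda>y. inf (vabs c) (vabs (y - x))) F) 0"
    by (rule net_solid[OF lsa, rotated]) (simp add: V.abs_of_nonneg inf.coboundedI1[OF le])
qed

lemma good_add:
  fixes \<eta> :: "'a::{ordered_real_vector,lattice} convergence"
  assumes lsa: "locally_solid_additive \<eta>" and g: "good A \<eta> b" "good A \<eta> c"
  shows "good A \<eta> (b + c)"
  unfolding good_def
proof (intro allI impI)
  fix F x assume "uconv A \<eta> F x"
  hence "\<eta> (filtermap (\<lambda>y. inf (vabs b) (vabs (y - x))) F) 0"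
    "\<eta> (filtermap (\<lambda>y. inf (vabs c) (vabs (y - x))) F) 0" using g by (simp_all add: good_def)
  from net_add[OF lsa this]
  have h: "\<eta> (filtermap (\<lambda>y. inf (vabs b) (vabs (y - x)) + inf (vabs c) (vabs (y - x))) F) 0" by simp
  have ineq: "inf (vabs (b + c)) w \<le> inf (vabs b) w + inf (vabs c) w" if w: "0 \<le> w" for w
  proof -
    have "inf (vabs (b + c)) w \<le> inf (vabs b + vabs c) w"
      using V.abs_triangle_ineq[of b c] by (simp add: inf.coboundedI1)
    also have "\<dots> \<le> inf (vabs b) w + inf (vabs c) w" by (rule inf_add_le) (simp_all add: w)
    finally show ?thesis .
  qed
  show "\<eta> (filtermap (\<lambda>y. inf (vabs (b + c)) (vabs (y - x))) F) 0"
    by (rule net_solid[OF lsa _ h]) (simp add: ineq)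
qed

lemma good_zero:
  fixes \<eta> :: "'a::{ordered_real_vector,lattice} convergence"
  assumes lsa: "locally_solid_additive \<eta>"
  shows "good A \<eta> 0"
  unfolding good_def by (simp add: inf_absorb1 conv_const[OF lsa_conv[OF lsa]])

lemma good_scale:
  fixes \<eta> :: "'a::{ordered_real_vector,lattice} convergence"
  assumes lsa: "locally_solid_additive \<eta>" and g: "good A \<eta> b"
  shows "good A \<eta> (r *\<^sub>R b)"
proof -
  have gb: "good A \<eta> (vabs b)" by (rule good_down[OF lsa g]) simp
  have gn: "good A \<eta> (of_nat n *\<^sub>R vabs b)" for n
  proof (induction n)
    case 0 thus ?case using good_zero[OF lsa] by simp
  next
    case (Suc n)
    have "of_nat (Suc n) *\<^sub>R vabs b = of_nat n *\<^sub>R vabs b + vabs b" by (simp add: algebra_simps)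
    thus ?case using good_add[OF lsa Suc gb] by simp
  qed
  define n where "n = nat \<lceil>\<bar>r\<bar>\<rceil>"
  have rn: "\<bar>r\<bar> \<le> of_nat n" unfolding n_def by linarith
  have "vabs (r *\<^sub>R b) \<le> \<bar>r\<bar> *\<^sub>R vabs b" by (rule vabs_scale_le)
  also have "\<dots> \<le> of_nat n *\<^sub>R vabs b" by (rule scaleR_right_mono[OF rn]) simp
  also have "\<dots> = vabs (of_nat n *\<^sub>R vabs b)" by (rule V.abs_of_nonneg[symmetric]) (simp add: scaleR_nonneg_nonneg)
  finally show ?thesis by (rule good_down[OF lsa gn])
qed

lemma good_ideal:
  fixes \<eta> :: "'a::{ordered_real_vector,lattice} convergence"
  assumes lsa: "locally_solid_additive \<eta>"
  shows "is_ideal {b. good A \<eta> b}"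
  unfolding is_ideal_def
  using good_zero[OF lsa] good_add[OF lsa] good_scale[OF lsa] good_down[OF lsa] by blast

lemma good_A: "a \<in> A \<Longrightarrow> good A \<eta> a"
  unfolding good_def uconv_def by blast

lemma ideal_of_good:
  fixes \<eta> :: "'a::{ordered_real_vector,lattice} convergence"
  assumes lsa: "locally_solid_additive \<eta>"
  shows "ideal_of A \<subseteq> {b. good A \<eta> b}"
  unfolding ideal_of_def using good_ideal[OF lsa] good_A by blast

lemma A_sub_ideal_of: "A \<subseteq> ideal_of A"
  unfolding ideal_of_def by blast

lemma uconv_good:
  assumes "B \<subseteq> {b. good A \<eta> b}" and "A \<subseteq> B"
  shows "uconv A \<eta> = uconv B \<eta>"
  using assms unfolding uconv_def good_def by (auto simp: fun_eq_iff)

lemma uconv_ideal_of: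
  fixes \<eta> :: "'a::{ordered_real_vector,lattice} convergence"
  assumes lsa: "locally_solid_additive \<eta>"
  shows "uconv A \<eta> = uconv (ideal_of A) \<eta>"
  by (rule uconv_good[OF ideal_of_good[OF lsa] A_sub_ideal_of])


lemma good_closed:
  fixes \<eta> :: "'a::{ordered_real_vector,lattice} convergence"
  assumes lsa: "locally_solid_additive \<eta>" and idem: "idempotent \<eta>"
  shows "conv_closed \<eta> {b. good A \<eta> b}"
  unfolding conv_closed_def
proof (intro allI impI, elim conjE)
  fix F' b
  assume nb: "F' \<noteq> bot" and ev: "\<forall>\<^sub>F y in F'. y \<in> {b. good A \<eta> b}" and cb: "\<eta> F' b"
  show "b \<in> {b. good A \<eta> b}"
    unfolding mem_Collect_eq good_def
  proof (intro allI impI)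
    fix F0 x0 assume u: "uconv A \<eta> F0 x0"
    define Fm where "Fm = filtermap (\<lambda>y. inf (vabs b) (vabs (y - x0))) F0"
    define G where "G = filtermap (\<lambda>b'. vabs (b' - b)) F'"
    define S where "S = {vabs (b' - b) | b'. good A \<eta> b'}"
    have "\<forall>F G S. (\<forall>\<^sub>F y in F. 0 \<le> y) \<and> G \<noteq> bot \<and> (\<forall>\<^sub>F z in G. z \<in> S) \<and> (\<forall>z\<in>S. 0 \<le> z) \<and>
        \<eta> G 0 \<and> (\<forall>z\<in>S. \<eta> (filtermap (\<lambda>y. pospart (y - z)) F) 0) \<longrightarrow> \<eta> F 0"
      using idem unfolding idempotent_def by blast
    from this[rule_format, of Fm G S]
    have imp: "(\<forall>\<^sub>F y in Fm. 0 \<le> y) \<Longrightarrow> G \<noteq> bot \<Longrightarrow> (\<forall>\<^sub>F z in G. z \<in> S) \<Longrightarrow> (\<forall>z\<in>S. 0 \<le> z) \<Longrightarrow>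
        \<eta> G 0 \<Longrightarrow> (\<forall>z\<in>S. \<eta> (filtermap (\<lambda>y. pospart (y - z)) Fm) 0) \<Longrightarrow> \<eta> Fm 0" by blast
    have 1: "\<forall>\<^sub>F y in Fm. 0 \<le> y" by (simp add: Fm_def eventually_filtermap)
    have 2: "G \<noteq> bot" using nb by (simp add: G_def filtermap_bot_iff)
    have 3: "\<forall>\<^sub>F z in G. z \<in> S" using ev unfolding G_def S_def eventually_filtermap
      by (auto elim!: eventually_mono)
    have 4: "\<forall>z\<in>S. 0 \<le> z" by (auto simp: S_def)
    have "\<eta> (filtermap (\<lambda>z. z - b) F') 0" using net_shift0[OF lsa cb, of b] by simp
    hence 5: "\<eta> G 0" unfolding G_def by (rule net_solid[OF lsa, rotated]) simp
    have 6: "\<forall>z\<in>S. \<eta> (filtermap (\<lambda>y. pospart (y - z)) Fm) 0"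
    proof
      fix z assume "z \<in> S"
      then obtain b' where z: "z = vabs (b' - b)" and g: "good A \<eta> b'" by (auto simp: S_def)
      have h: "\<eta> (filtermap (\<lambda>y. inf (vabs b') (vabs (y - x0))) F0) 0" using g u by (simp add: good_def)
      have "\<eta> (filtermap (\<lambda>y. pospart (inf (vabs b) (vabs (y - x0)) - z)) F0) 0"
      proof (rule net_solid[OF lsa _ h], rule always_eventually, rule allI)
        fix y
        have "inf (vabs b) (vabs (y - x0)) \<le> vabs (b' - b) + inf (vabs b') (vabs (y - x0))"
          by (rule key_ineq) simp
        hence "inf (vabs b) (vabs (y - x0)) - z \<le> inf (vabs b') (vabs (y - x0))"
          unfolding z by (metis diff_le_eq add.commute)
        hence "pospart (inf (vabs b) (vabs (y - x0)) - z) \<le> inf (vabs b') (vabs (y - x0))"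
          unfolding pospart_def by (rule le_supI) simp
        moreover have "0 \<le> pospart (inf (vabs b) (vabs (y - x0)) - z)" by (simp add: pospart_def)
        ultimately show "vabs (pospart (inf (vabs b) (vabs (y - x0)) - z)) \<le> vabs (inf (vabs b') (vabs (y - x0)))"
          by (simp add: V.abs_of_nonneg)
      qed
      thus "\<eta> (filtermap (\<lambda>y. pospart (y - z)) Fm) 0" by (simp add: Fm_def filtermap_filtermap)
    qed
    show "\<eta> (filtermap (\<lambda>y. inf (vabs b) (vabs (y - x0))) F0) 0"
      using imp[OF 1 2 3 4 5 6] by (simp add: Fm_def)
  qed
qed

lemma uconv_closure:
  fixes \<eta> :: "'a::{ordered_real_vector,lattice} convergence"
  assumes lsa: "locally_solid_additive \<eta>" and idem: "idempotent \<eta>"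
  shows "uconv A \<eta> = uconv (conv_closure \<eta> (ideal_of A)) \<eta>"
proof (rule uconv_good)
  show "conv_closure \<eta> (ideal_of A) \<subseteq> {b. good A \<eta> b}"
    unfolding conv_closure_def using good_closed[OF lsa idem] ideal_of_good[OF lsa] by blast
  show "A \<subseteq> conv_closure \<eta> (ideal_of A)"
    unfolding conv_closure_def using A_sub_ideal_of by blast
qed

lemma part_ii:
  fixes \<eta> :: "'a::{ordered_real_vector,lattice} convergence"
  assumes lsa: "locally_solid_additive \<eta>" and f: "\<forall>\<alpha>. 0 \<le> f \<alpha>"
  shows "uconv A \<eta> (filtermap f T) 0 \<longleftrightarrow>
        (\<forall>a\<in>A. \<forall>g. (\<forall>\<alpha>. g \<alpha> \<in> {0..vabs a} \<and> 0 \<le> g \<alpha> \<and> g \<alpha> \<le> f \<alpha>)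
                 \<longrightarrow> \<eta> (filtermap g T) 0)"
proof -
  have eq: "uconv A \<eta> (filtermap f T) 0 \<longleftrightarrow> (\<forall>a\<in>A. \<eta> (filtermap (\<lambda>\<alpha>. inf (vabs a) (f \<alpha>)) T) 0)"
    using f by (simp add: uconv_def filtermap_filtermap V.abs_of_nonneg)
  show ?thesis unfolding eq
  proof (intro iffI ballI allI impI)
    fix a g assume h: "\<forall>a\<in>A. \<eta> (filtermap (\<lambda>\<alpha>. inf (vabs a) (f \<alpha>)) T) 0" and a: "a \<in> A"
      and g: "\<forall>\<alpha>. g \<alpha> \<in> {0..vabs a} \<and> 0 \<le> g \<alpha> \<and> g \<alpha> \<le> f \<alpha>"
    show "\<eta> (filtermap g T) 0"
      by (rule net_solid[OF lsa _ h[rule_format, OF a]]) (use g f in \<open>simp add: V.abs_of_nonneg\<close>)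
  next
    fix a assume h: "\<forall>a\<in>A. \<forall>g. (\<forall>\<alpha>. g \<alpha> \<in> {0..vabs a} \<and> 0 \<le> g \<alpha> \<and> g \<alpha> \<le> f \<alpha>) \<longrightarrow> \<eta> (filtermap g T) 0"
      and a: "a \<in> A"
    show "\<eta> (filtermap (\<lambda>\<alpha>. inf (vabs a) (f \<alpha>)) T) 0"
      by (rule h[rule_format, OF a]) (simp add: f)
  qed
qed

lemma part_iii:
  fixes \<eta> :: "'a::{ordered_real_vector,lattice} convergence"
  assumes E: "is_ideal E" and H: "is_ideal H"
  shows "uconv H (uconv E \<eta>) = uconv (E \<inter> H) \<eta>"
proof (intro ext iffI)
  fix F x
  assume u: "uconv H (uconv E \<eta>) F x"
  show "uconv (E \<inter> H) \<eta> F x" unfolding uconv_def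
  proof
    fix c assume c: "c \<in> E \<inter> H"
    have all: "\<forall>a\<in>H. \<forall>aa\<in>E. \<eta> (filtermap (\<lambda>xa. inf (vabs aa) (inf (vabs a) (vabs (xa - x)))) F) 0"
      using u by (simp add: uconv_def filtermap_filtermap V.abs_of_nonneg)
    have "\<eta> (filtermap (\<lambda>y. inf (vabs c) (inf (vabs c) (vabs (y - x)))) F) 0"
      using all c by blast
    thus "\<eta> (filtermap (\<lambda>y. inf (vabs c) (vabs (y - x))) F) 0" by simp
  qed
next
  fix F x
  assume u: "uconv (E \<inter> H) \<eta> F x"
  show "uconv H (uconv E \<eta>) F x" unfolding uconv_def
  proof (intro ballI)
    fix h e assume h: "h \<in> H" and e: "e \<in> E"
    define c where "c = inf (vabs e) (vabs h)"
    have c0: "0 \<le> c" by (simp add: c_def)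
    have "c \<in> E" using E e c0 unfolding is_ideal_def c_def by (auto simp: V.abs_of_nonneg)
    moreover have "c \<in> H" using H h c0 unfolding is_ideal_def c_def by (auto simp: V.abs_of_nonneg)
    ultimately have "\<eta> (filtermap (\<lambda>y. inf (vabs c) (vabs (y - x))) F) 0" using u by (simp add: uconv_def)
    thus "\<eta> (filtermap (\<lambda>y. inf (vabs e) (vabs (y - 0)))
          (filtermap (\<lambda>y. inf (vabs h) (vabs (y - x))) F)) 0"
      using c0 by (simp add: filtermap_filtermap V.abs_of_nonneg c_def inf_assoc)
  qed
qed

lemma ideal_UNIV: "is_ideal UNIV" by (simp add: is_ideal_def)

lemma part_v:
  fixes \<eta> :: "'a::{ordered_real_vector,lattice} convergence"
  assumes lsa: "locally_solid_additive \<eta>" and idem: "idempotent \<eta>" and tu: "topological_unit \<eta> h"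
    and f: "\<forall>\<alpha>. 0 \<le> f \<alpha>"
  shows "uconv UNIV \<eta> (filtermap f T) 0 \<longleftrightarrow> \<eta> (filtermap (\<lambda>\<alpha>. inf h (f \<alpha>)) T) 0"
proof -
  have h0: "0 \<le> h" and cl: "conv_closure \<eta> (principal_ideal h) = UNIV"
    using tu by (auto simp: topological_unit_def)
  have "principal_ideal h \<subseteq> ideal_of {h}"
  proof
    fix z assume "z \<in> principal_ideal h"
    then obtain c y where y: "- h \<le> y" "y \<le> h" and z: "z = c *\<^sub>R y" by (auto simp: principal_ideal_def)
    have vy: "vabs y \<le> vabs h" using y h0 V.abs_leI[of y h] minus_le_iff[of h y] by (simp add: V.abs_of_nonneg)
    show "z \<in> ideal_of {h}" unfolding ideal_of_def
    proof
      fix E assume "E \<in> {E. is_ideal E \<and> {h} \<subseteq> E}"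
      hence "is_ideal E" "h \<in> E" by auto
      thus "z \<in> E" using vy unfolding is_ideal_def z by blast
    qed
  qed
  hence "conv_closure \<eta> (principal_ideal h) \<subseteq> conv_closure \<eta> (ideal_of {h})"
    unfolding conv_closure_def by blast
  hence "conv_closure \<eta> (ideal_of {h}) = UNIV" using cl by blast
  hence "uconv UNIV \<eta> = uconv {h} \<eta>" using uconv_closure[OF lsa idem, of "{h}"] by simp
  thus ?thesis using f h0 by (simp add: uconv_def filtermap_filtermap V.abs_of_nonneg)
qed


theorem proposition3p1:
  fixes \<eta> :: "'a::{ordered_real_vector,lattice} convergence"
    and A E H :: "'a set"
  assumes lsa: "locally_solid_additive \<eta>"
    and E: "is_ideal E" and H: "is_ideal H"
  shows
    \<comment> \<open>(i)\<close>
    "(uconv A \<eta> = uconv (ideal_of A) \<eta>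
      \<and> locally_solid_additive (uconv A \<eta>)
      \<and> (\<forall>a\<in>A. stronger_on {0..vabs a} (uconv A \<eta>) \<eta>)
      \<and> (\<forall>\<theta>. locally_solid_additive \<theta> \<and> (\<forall>a\<in>A. stronger_on {0..vabs a} \<theta> \<eta>)
              \<longrightarrow> stronger_on UNIV \<theta> (uconv A \<eta>))
      \<and> (\<forall>a\<in>A. coincide_on {0..vabs a} (uconv A \<eta>) \<eta>))
    \<and> \<comment> \<open>(ii)\<close>
    (\<forall>(le :: 'i \<Rightarrow> 'i \<Rightarrow> bool) f. directed le \<and> (\<forall>\<alpha>. 0 \<le> f \<alpha>) \<longrightarrow>
       (uconv A \<eta> (filtermap f (tails le)) 0 \<longleftrightarrow>
        (\<forall>a\<in>A. \<forall>g. (\<forall>\<alpha>. g \<alpha> \<in> {0..vabs a} \<and> 0 \<le> g \<alpha> \<and> g \<alpha> \<le> f \<alpha>)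
                 \<longrightarrow> \<eta> (filtermap g (tails le)) 0)))
    \<and> \<comment> \<open>(iii)\<close>
    (uconv H (uconv E \<eta>) = uconv (E \<inter> H) \<eta>
     \<and> uconv E (uconv UNIV \<eta>) = uconv E \<eta>
     \<and> uconv UNIV (uconv E \<eta>) = uconv E \<eta>
     \<and> uconv E (uconv E \<eta>) = uconv E \<eta>)
    \<and> \<comment> \<open>(iv)\<close>
    (idempotent \<eta> \<longrightarrow> uconv A \<eta> = uconv (conv_closure \<eta> (ideal_of A)) \<eta>)
    \<and> \<comment> \<open>(v)\<close>
    (\<forall>h (le :: 'j \<Rightarrow> 'j \<Rightarrow> bool) f. idempotent \<eta> \<and> topological_unit \<eta> h \<and>
       directed le \<and> (\<forall>\<alpha>. 0 \<le> f \<alpha>) \<longrightarrow>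
       (uconv UNIV \<eta> (filtermap f (tails le)) 0 \<longleftrightarrow> \<eta> (filtermap (\<lambda>\<alpha>. inf h (f \<alpha>)) (tails le)) 0))"
proof -
  have i1: "uconv A \<eta> = uconv (ideal_of A) \<eta>" by (rule uconv_ideal_of[OF lsa])
  have i2: "locally_solid_additive (uconv A \<eta>)" by (rule uconv_lsa[OF lsa])
  have i3: "\<forall>a\<in>A. stronger_on {0..vabs a} (uconv A \<eta>) \<eta>" using uconv_stronger[OF lsa] by blast
  have i4: "\<forall>\<theta>. locally_solid_additive \<theta> \<and> (\<forall>a\<in>A. stronger_on {0..vabs a} \<theta> \<eta>)
              \<longrightarrow> stronger_on UNIV \<theta> (uconv A \<eta>)" using uconv_weakest[OF lsa] by blast
  have i5: "\<forall>a\<in>A. coincide_on {0..vabs a} (uconv A \<eta>) \<eta>"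
  proof
    fix a assume "a \<in> A"
    moreover have "stronger_on {0..vabs a} \<eta> (uconv A \<eta>)"
      unfolding stronger_on_def using eta_imp_uconv[OF lsa] by blast
    ultimately show "coincide_on {0..vabs a} (uconv A \<eta>) \<eta>"
      unfolding coincide_on_def using i3 by blast
  qed
  have ii: "\<forall>(le :: 'i \<Rightarrow> 'i \<Rightarrow> bool) f. directed le \<and> (\<forall>\<alpha>. 0 \<le> f \<alpha>) \<longrightarrow>
       (uconv A \<eta> (filtermap f (tails le)) 0 \<longleftrightarrow>
        (\<forall>a\<in>A. \<forall>g. (\<forall>\<alpha>. g \<alpha> \<in> {0..vabs a} \<and> 0 \<le> g \<alpha> \<and> g \<alpha> \<le> f \<alpha>)
                 \<longrightarrow> \<eta> (filtermap g (tails le)) 0))"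
  proof (intro allI impI)
    fix le :: "'i \<Rightarrow> 'i \<Rightarrow> bool" and f :: "'i \<Rightarrow> 'a"
    assume "directed le \<and> (\<forall>\<alpha>. 0 \<le> f \<alpha>)"
    thus "uconv A \<eta> (filtermap f (tails le)) 0 \<longleftrightarrow>
        (\<forall>a\<in>A. \<forall>g. (\<forall>\<alpha>. g \<alpha> \<in> {0..vabs a} \<and> 0 \<le> g \<alpha> \<and> g \<alpha> \<le> f \<alpha>)
                 \<longrightarrow> \<eta> (filtermap g (tails le)) 0)"
      using part_ii[OF lsa, of f A "tails le"] by blast
  qed
  have iii1: "uconv H (uconv E \<eta>) = uconv (E \<inter> H) \<eta>" by (rule part_iii[OF E H])
  have iii2: "uconv E (uconv UNIV \<eta>) = uconv E \<eta>" using part_iii[OF ideal_UNIV E, of \<eta>] by simp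
  have iii3: "uconv UNIV (uconv E \<eta>) = uconv E \<eta>" using part_iii[OF E ideal_UNIV, of \<eta>] by simp
  have iii4: "uconv E (uconv E \<eta>) = uconv E \<eta>" using part_iii[OF E E, of \<eta>] by simp
  have iv: "idempotent \<eta> \<longrightarrow> uconv A \<eta> = uconv (conv_closure \<eta> (ideal_of A)) \<eta>"
    using uconv_closure[OF lsa] by blast
  have v: "\<forall>h (le :: 'j \<Rightarrow> 'j \<Rightarrow> bool) f. idempotent \<eta> \<and> topological_unit \<eta> h \<and>
       directed le \<and> (\<forall>\<alpha>. 0 \<le> f \<alpha>) \<longrightarrow>
       (uconv UNIV \<eta> (filtermap f (tails le)) 0 \<longleftrightarrow> \<eta> (filtermap (\<lambda>\<alpha>. inf h (f \<alpha>)) (tails le)) 0)"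
  proof (intro allI impI)
    fix h and le :: "'j \<Rightarrow> 'j \<Rightarrow> bool" and f :: "'j \<Rightarrow> 'a"
    assume a: "idempotent \<eta> \<and> topological_unit \<eta> h \<and> directed le \<and> (\<forall>\<alpha>. 0 \<le> f \<alpha>)"
    show "uconv UNIV \<eta> (filtermap f (tails le)) 0 \<longleftrightarrow> \<eta> (filtermap (\<lambda>\<alpha>. inf h (f \<alpha>)) (tails le)) 0"
      using a part_v[OF lsa, of h f "tails le"] by blast
  qed
  show ?thesis by (intro conjI i1 i2 i3 i4 i5 ii iii1 iii2 iii3 iii4 iv v)
qed

end
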